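(* (a) If $\Lambda$ is a boundary lamination, then no point $p\in S^1$ is contained in more than two leaves of $\Lambda$. (b) Conversely, suppose $\Lambda$ is a lamination such that no point $p\in S^1$ is contained in more than two leaves of $\Lambda$, and $\Lambda$ has no isolated leaves. Let $\mathcal{L}:=\mathrm{Rel}(\Lambda)$. Then $\mathrm{Lam}(\mathcal{L})=\Lambda$; in particular $\Lambda$ is a boundary lamination.
   Context: A lamination is a closed subset of the space of unordered pairs of distinct points of $S^1$ such that no two elements (leaves) are linked in $S^1$. Leaves are also viewed as geodesics in $\mathbb{H}^2$ with $S^1=\partial\mathbb{H}^2$; a leaf is isolated if it is not a limit of other leaves on either side. A laminar relation is an equivalence relation on $S^1$ with closed classes, closed in the space of unordered distinct pairs, with distinct classes unlinked. For a laminar relation $\mathcal{L}$, $\mathrm{Lam}(\mathcal{L})$ is the lamination consisting, for each nontrivial class $\nu$, of the pair $\nu$ if $|\nu|=2$ and of the endpoint pairs of the sides of the hyperbolic convex hull of $\nu$ if $|\nu|>2$; a lamination of this form is a boundary lamination. For a lamination $\Lambda$, $\mathrm{Rel}(\Lambda)$ is the smallest closed equivalence relation (as a set of unordered pairs) containing $\Lambda$ and containing every unordered pair that crosses only countably many leaves of $\Lambda$. *)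

theory Defs
  imports "HOL-Analysis.Analysis"
begin

text \<open>The circle S^1 is the unit circle in the complex plane (boundary of the
Klein/Poincare disk model of the hyperbolic plane).  An unordered pair {a,b} of
distinct points is encoded by the two ordered pairs (a,b), (b,a); sets of
unordered pairs are encoded as symmetric sets of ordered off-diagonal pairs.
The topology of the space of unordered distinct pairs is the quotient of the
off-diagonal subspace of S^1 x S^1, so a symmetric set is closed there iff it is
closed in the off-diagonal subspace.\<close>

definition S1 :: "complex set" where
  "S1 = sphere 0 1"

definition offdiag :: "(complex \<times> complex) set" where
  "offdiag = {(a, b). a \<in> S1 \<and> b \<in> S1 \<and> a \<noteq> b}"

definition linked :: "complex \<Rightarrow> complex \<Rightarrow> complex \<Rightarrow> complex \<Rightarrow> bool" where
  "linked a b c d \<longleftrightarrow> a \<in> S1 \<and> b \<in> S1 \<and> c \<in> S1 \<and> d \<in> S1 \<and> a \<noteq> b \<and> c \<noteq> d \<and>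
     {a, b} \<inter> {c, d} = {} \<and> \<not> connected_component (S1 - {a, b}) c d"

definition lamination :: "(complex \<times> complex) set \<Rightarrow> bool" where
  "lamination \<Lambda> \<longleftrightarrow> \<Lambda> \<subseteq> offdiag \<and> sym \<Lambda> \<and> closedin (top_of_set offdiag) \<Lambda> \<and>
     (\<forall>(a, b) \<in> \<Lambda>. \<forall>(c, d) \<in> \<Lambda>. \<not> linked a b c d)"

definition isolated_leaf :: "(complex \<times> complex) set \<Rightarrow> complex \<times> complex \<Rightarrow> bool" where
  "isolated_leaf \<Lambda> l \<longleftrightarrow> l \<in> \<Lambda> \<and> \<not> (l islimpt \<Lambda>)"

definition laminar_relation :: "(complex \<times> complex) set \<Rightarrow> bool" where
  "laminar_relation R \<longleftrightarrow> equiv S1 R \<and> (\<forall>x \<in> S1. closed (R `` {x})) \<and>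
     closedin (top_of_set offdiag) (R \<inter> offdiag) \<and>
     (\<forall>x \<in> S1. \<forall>y \<in> S1. (x, y) \<notin> R \<longrightarrow>
        (\<forall>a \<in> R `` {x}. \<forall>b \<in> R `` {x}. \<forall>c \<in> R `` {y}. \<forall>d \<in> R `` {y}. \<not> linked a b c d))"

text \<open>The hyperbolic convex hull of a class is taken in the Klein model,
where geodesics are Euclidean chords, so the hyperbolic convex hull is the
Euclidean convex hull and its sides are the chords [a,b] (a, b in the class)
lying in the frontier of the hull.\<close>
definition Lam :: "(complex \<times> complex) set \<Rightarrow> (complex \<times> complex) set" where
  "Lam R = {(a, b). \<exists>x \<in> S1. let \<nu> = R `` {x} in
      (finite \<nu> \<and> card \<nu> = 2 \<and> {a, b} = \<nu> \<and> a \<noteq> b) \<or>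
      ((infinite \<nu> \<or> card \<nu> > 2) \<and> a \<in> \<nu> \<and> b \<in> \<nu> \<and> a \<noteq> b \<and>
        closed_segment a b \<subseteq> frontier (convex hull \<nu>))}"

definition boundary_lamination :: "(complex \<times> complex) set \<Rightarrow> bool" where
  "boundary_lamination \<Lambda> \<longleftrightarrow> (\<exists>R. laminar_relation R \<and> \<Lambda> = Lam R)"

text \<open>Rel(Lambda): smallest closed equivalence relation on S^1 containing Lambda and
all pairs of distinct points crossing only countably many leaves.  (Closedness
in S^1 x S^1 of an equivalence relation is equivalent to closedness of its set of
distinct unordered pairs in the space of unordered distinct pairs.)\<close>
definition Rel :: "(complex \<times> complex) set \<Rightarrow> (complex \<times> complex) set" where
  "Rel \<Lambda> = \<Inter>{R. equiv S1 R \<and> closed R \<and> \<Lambda> \<subseteq> R \<and>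
      {(a, b). (a, b) \<in> offdiag \<and> countable {(c, d) \<in> \<Lambda>. linked a b c d}} \<subseteq> R}"

definition at_most_two_leaves :: "(complex \<times> complex) set \<Rightarrow> bool" where
  "at_most_two_leaves \<Lambda> \<longleftrightarrow> (\<forall>p \<in> S1. finite {q. (p, q) \<in> \<Lambda>} \<and> card {q. (p, q) \<in> \<Lambda>} \<le> 2)"

end

theory Submission
  imports Defs
begin

lemma S1_iff: "z \<in> S1 \<longleftrightarrow> cmod z = 1"
  by (simp add: S1_def)

lemma cis_S1[simp]: "cis t \<in> S1"
  by (simp add: S1_iff norm_cis)

lemma sin_half_eq0: assumes "\<bar>u\<bar> < 2*pi" "sin (u/2) = 0" shows "u = 0"
proof -
  have "-pi < u/2" "u/2 < pi" using assms by auto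
  then have "u/2 = 0" using assms(2) sin_eq_0_pi by blast
  then show ?thesis by simp
qed

lemma cis_eq_1: assumes "cis u = 1" "\<bar>u\<bar> < 2*pi" shows "u = 0"
proof -
  have "cos u = 1" using assms(1) by (metis cis.sel(1) one_complex.sel(1))
  moreover have "cos u = 1 - 2 * (sin (u/2))^2"
    using cos_double_sin[of "u/2"] by simp
  ultimately have "sin (u/2) = 0" by simp
  then show ?thesis using sin_half_eq0 assms(2) by blast
qed

lemma cis_inj: assumes "cis s = cis t" "\<bar>s - t\<bar> < 2*pi" shows "s = t"
proof -
  have "cis (s - t) = cis s * cis (-t)" by (simp add: cis_mult)
  also have "\<dots> = cis t * cis (-t)" using assms by simp
  also have "\<dots> = 1" by (simp add: cis_mult)
  finally show ?thesis using cis_eq_1 assms(2) by fastforce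
qed

definition ang :: "complex \<Rightarrow> real" where
  "ang z = (if 0 \<le> Arg z then Arg z else Arg z + 2*pi)"

lemma ang_range: "0 \<le> ang z" "ang z < 2*pi"
  using Arg_bounded[of z] pi_gt_zero unfolding ang_def by auto

lemma cis_2pi: "cis (x + 2*pi) = cis x"
  by (simp add: cis.ctr complex_eq_iff)

lemma cis_ang: assumes "z \<in> S1" shows "cis (ang z) = z"
proof -
  have z0: "z \<noteq> 0" using assms by (auto simp: S1_iff)
  have "sgn z = z" using assms by (simp add: S1_iff sgn_div_norm)
  then have "cis (Arg z) = z" using cis_Arg[OF z0] by simp
  then show ?thesis unfolding ang_def using cis_2pi by simp
qed

lemma ang_inj: assumes "a \<in> S1" "b \<in> S1" "ang a = ang b" shows "a = b"
  using assms cis_ang by metis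

lemma ang_cis: assumes "0 \<le> t" "t < 2*pi" shows "ang (cis t) = t"
proof -
  have "cis (ang (cis t)) = cis t" by (rule cis_ang) simp
  moreover have "\<bar>ang (cis t) - t\<bar> < 2*pi" using ang_range[of "cis t"] assms by auto
  ultimately show ?thesis using cis_inj by blast
qed

definition side :: "complex \<Rightarrow> complex \<Rightarrow> complex \<Rightarrow> real" where
  "side a b z = Im (cnj (b - a) * (z - a))"

lemma trig_id: fixes x y :: real shows "sin (2*x) + sin (2*y) - sin (2*x + 2*y) = 4 * sin x * sin y * sin (x + y)"
proof -
  have c2: "cos (2*x) = 1 - 2 * (sin x)^2" "cos (2*y) = 1 - 2 * (sin y)^2" by (simp_all add: cos_double_sin)
  have A: "sin (2*x + 2*y) = (2 * sin x * cos x) * (1 - 2 * (sin y)^2) + (1 - 2 * (sin x)^2) * (2 * sin y * cos y)"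
    unfolding sin_add c2 sin_double by (simp add: algebra_simps)
  show ?thesis unfolding A sin_double by (simp add: sin_add algebra_simps power2_eq_square)
qed

lemma side_cis: "side (cis \<alpha>) (cis \<beta>) (cis t) = 4 * sin ((t-\<beta>)/2) * sin ((\<beta>-\<alpha>)/2) * sin ((t-\<alpha>)/2)"
proof -
  have "side (cis \<alpha>) (cis \<beta>) (cis t) = sin (t-\<beta>) + sin (\<beta>-\<alpha>) - sin (t - \<alpha>)"
    by (simp add: side_def sin_diff algebra_simps)
  also have "\<dots> = 4 * sin ((t-\<beta>)/2) * sin ((\<beta>-\<alpha>)/2) * sin ((t-\<beta>)/2 + (\<beta>-\<alpha>)/2)"
  proof -
    have e1: "2*((t-\<beta>)/2) = t - \<beta>" "2*((\<beta>-\<alpha>)/2) = \<beta>-\<alpha>" "2*((t-\<beta>)/2) + 2*((\<beta>-\<alpha>)/2) = t - \<alpha>" by (simp_all add: field_simps)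
    show ?thesis using trig_id[of "(t-\<beta>)/2" "(\<beta>-\<alpha>)/2"] unfolding e1 by simp
  qed
  also have "(t-\<beta>)/2 + (\<beta>-\<alpha>)/2 = (t-\<alpha>)/2" by (simp add: field_simps)
  finally show ?thesis by simp
qed

lemma sin_half_sign: assumes "\<bar>u\<bar> < 2*pi"
  shows "0 < sin (u/2) \<longleftrightarrow> 0 < u" "sin (u/2) < 0 \<longleftrightarrow> u < 0"
proof -
  have pos: "0 < sin (v/2)" if "0 < v" "v < 2*pi" for v
    using that by (intro sin_gt_zero) auto
  have "0 < sin (u/2)" if "0 < u" using pos that assms by auto
  moreover have "sin (u/2) < 0" if "u < 0"
    using pos[of "-u"] that assms by auto
  ultimately show "0 < sin (u/2) \<longleftrightarrow> 0 < u" "sin (u/2) < 0 \<longleftrightarrow> u < 0"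
    by (metis div_0 less_asym' linorder_neqE_linordered_idom sin_zero)+
qed

lemma side_sign:
  assumes "a \<in> S1" "b \<in> S1" "z \<in> S1"
  defines "x \<equiv> ang a" and "y \<equiv> ang b" and "w \<equiv> ang z"
  shows "0 < side a b z \<longleftrightarrow> (x<y \<and> (w<x \<or> y<w)) \<or> (y<x \<and> y<w \<and> w<x)"
    and "side a b z < 0 \<longleftrightarrow> (x<y \<and> x<w \<and> w<y) \<or> (y<x \<and> (w<y \<or> x<w))"
proof -
  have e: "side a b z = 4 * sin ((w-y)/2) * sin ((y-x)/2) * sin ((w-x)/2)"
    using side_cis[of x y w] cis_ang assms by simp
  have r: "0 \<le> x" "x < 2*pi" "0 \<le> y" "y < 2*pi" "0 \<le> w" "w < 2*pi"
    unfolding x_def y_def w_def using ang_range by auto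
  have P: "0 < sin ((w-y)/2) \<longleftrightarrow> y < w" "sin ((w-y)/2) < 0 \<longleftrightarrow> w < y"
    using sin_half_sign[of "w-y"] r by auto
  have Q: "0 < sin ((y-x)/2) \<longleftrightarrow> x < y" "sin ((y-x)/2) < 0 \<longleftrightarrow> y < x"
    using sin_half_sign[of "y-x"] r by auto
  have R: "0 < sin ((w-x)/2) \<longleftrightarrow> x < w" "sin ((w-x)/2) < 0 \<longleftrightarrow> w < x"
    using sin_half_sign[of "w-x"] r by auto
  show "0 < side a b z \<longleftrightarrow> (x<y \<and> (w<x \<or> y<w)) \<or> (y<x \<and> y<w \<and> w<x)"
    unfolding e using P Q R by (auto simp: zero_less_mult_iff mult_less_0_iff)
  show "side a b z < 0 \<longleftrightarrow> (x<y \<and> x<w \<and> w<y) \<or> (y<x \<and> (w<y \<or> x<w))"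
    unfolding e using P Q R by (auto simp: zero_less_mult_iff mult_less_0_iff)
qed

definition btw :: "real \<Rightarrow> real \<Rightarrow> real \<Rightarrow> bool" where
  "btw x y z \<longleftrightarrow> min x y < z \<and> z < max x y"

lemma side_neg_btw:
  assumes "a \<in> S1" "b \<in> S1" "z \<in> S1"
  shows "side a b z < 0 \<longleftrightarrow> (ang a \<noteq> ang b \<and> ang z \<noteq> ang a \<and> ang z \<noteq> ang b \<and>
     (ang a < ang b \<longleftrightarrow> btw (ang a) (ang b) (ang z)))"
proof (cases "ang a < ang b")
  case True
  then show ?thesis using side_sign(2)[OF assms] unfolding btw_def by (auto simp: min_def max_def)
next
  case False
  then show ?thesis using side_sign(2)[OF assms] unfolding btw_def by (auto simp: min_def max_def)
qed

lemma side_pos_btw: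
  assumes "a \<in> S1" "b \<in> S1" "z \<in> S1"
  shows "0 < side a b z \<longleftrightarrow> (ang a \<noteq> ang b \<and> ang z \<noteq> ang a \<and> ang z \<noteq> ang b \<and>
     (ang a < ang b \<longleftrightarrow> \<not> btw (ang a) (ang b) (ang z)))"
proof (cases "ang a < ang b")
  case True
  then show ?thesis using side_sign(1)[OF assms] unfolding btw_def by (auto simp: min_def max_def)
next
  case False
  then show ?thesis using side_sign(1)[OF assms] unfolding btw_def by (auto simp: min_def max_def)
qed

lemma side_prod_neg:
  assumes "a \<in> S1" "b \<in> S1" "c \<in> S1" "d \<in> S1"
  shows "side a b c * side a b d < 0 \<longleftrightarrow>
    (ang a \<noteq> ang b \<and> ang c \<noteq> ang a \<and> ang c \<noteq> ang b \<and> ang d \<noteq> ang a \<and> ang d \<noteq> ang b \<and>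
     (btw (ang a) (ang b) (ang c) \<noteq> btw (ang a) (ang b) (ang d)))"
  unfolding mult_less_0_iff side_pos_btw[OF assms(1,2,3)] side_pos_btw[OF assms(1,2,4)]
    side_neg_btw[OF assms(1,2,3)] side_neg_btw[OF assms(1,2,4)] by blast

lemma side_prod_pos:
  assumes "a \<in> S1" "b \<in> S1" "c \<in> S1" "d \<in> S1"
  shows "0 < side a b c * side a b d \<longleftrightarrow>
    (ang a \<noteq> ang b \<and> ang c \<noteq> ang a \<and> ang c \<noteq> ang b \<and> ang d \<noteq> ang a \<and> ang d \<noteq> ang b \<and>
     (btw (ang a) (ang b) (ang c) = btw (ang a) (ang b) (ang d)))"
  unfolding zero_less_mult_iff side_pos_btw[OF assms(1,2,3)] side_pos_btw[OF assms(1,2,4)]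
    side_neg_btw[OF assms(1,2,3)] side_neg_btw[OF assms(1,2,4)] by blast

lemma side_zero_iff:
  assumes "a \<in> S1" "b \<in> S1" "z \<in> S1"
  shows "side a b z = 0 \<longleftrightarrow> z = a \<or> z = b \<or> a = b"
proof -
  have "side a b z = 0 \<longleftrightarrow> ang z = ang a \<or> ang z = ang b \<or> ang a = ang b"
    using side_sign[OF assms] by (smt (verit))
  then show ?thesis using ang_inj assms by metis
qed

lemma side_self[simp]: "side a b a = 0" "side a b b = 0" "side a a z = 0"
  by (auto simp: side_def algebra_simps)

lemma arc_sub:
  assumes "a \<in> S1" "b \<in> S1" "ang a \<le> ang b"
  shows "cis ` {ang a<..<ang b} \<subseteq> S1 - {a, b}" "cis ` {ang b<..<ang a + 2*pi} \<subseteq> S1 - {a, b}"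
proof -
  note r = ang_range[of a] ang_range[of b]
  show "cis ` {ang a<..<ang b} \<subseteq> S1 - {a, b}"
  proof
    fix z assume "z \<in> cis ` {ang a<..<ang b}"
    then obtain t where t: "z = cis t" "ang a < t" "t < ang b" by auto
    have "cis t \<noteq> cis (ang a)" using cis_inj[of t "ang a"] t r by auto
    moreover have "cis t \<noteq> cis (ang b)" using cis_inj[of t "ang b"] t r by auto
    ultimately show "z \<in> S1 - {a, b}" using t cis_ang assms by auto
  qed
  show "cis ` {ang b<..<ang a + 2*pi} \<subseteq> S1 - {a, b}"
  proof
    fix z assume "z \<in> cis ` {ang b<..<ang a + 2*pi}"
    then obtain t where t: "z = cis t" "ang b < t" "t < ang a + 2*pi" by auto
    have "cis t \<noteq> cis (ang a + 2*pi)" using cis_inj[of t "ang a + 2*pi"] t r assms by auto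
    then have "cis t \<noteq> cis (ang a)" using cis_2pi by simp
    moreover have "cis t \<noteq> cis (ang b)" using cis_inj[of t "ang b"] t r assms(3) by auto
    ultimately show "z \<in> S1 - {a, b}" using t cis_ang assms by auto
  qed
qed

lemma arc_mem:
  assumes "a \<in> S1" "b \<in> S1" "ang a < ang b" "z \<in> S1 - {a,b}"
  shows "btw (ang a) (ang b) (ang z) \<Longrightarrow> z \<in> cis ` {ang a<..<ang b}"
    and "\<not> btw (ang a) (ang b) (ang z) \<Longrightarrow> z \<in> cis ` {ang b<..<ang a + 2*pi}"
proof -
  note r = ang_range[of a] ang_range[of b] ang_range[of z]
  have za: "ang z \<noteq> ang a" "ang z \<noteq> ang b" using assms ang_inj by auto
  have zc: "z = cis (ang z)" using cis_ang assms by auto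
  show "btw (ang a) (ang b) (ang z) \<Longrightarrow> z \<in> cis ` {ang a<..<ang b}"
    using zc assms(3) unfolding btw_def by (auto intro!: image_eqI[where x="ang z"])
  assume nb: "\<not> btw (ang a) (ang b) (ang z)"
  show "z \<in> cis ` {ang b<..<ang a + 2*pi}"
  proof (cases "ang z < ang a")
    case True
    then have "z = cis (ang z + 2*pi)" using zc cis_2pi by simp
    moreover have "ang z + 2*pi \<in> {ang b<..<ang a + 2*pi}" using True r by auto
    ultimately show ?thesis by blast
  next
    case False
    then have "ang b < ang z" using nb za assms(3) unfolding btw_def by auto
    then have "ang z \<in> {ang b<..<ang a + 2*pi}" using r by auto
    then show ?thesis using zc by blast
  qed
qed

lemma connected_arcs: "connected (cis ` {x<..<y})"
  by (intro connected_continuous_image continuous_on_cis continuous_on_id) simp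

lemma comp_iff:
  assumes "a \<in> S1" "b \<in> S1" "a \<noteq> b" "c \<in> S1 - {a,b}" "d \<in> S1 - {a,b}"
  shows "connected_component (S1 - {a,b}) c d \<longleftrightarrow> 0 < side a b c * side a b d"
proof
  assume "connected_component (S1 - {a,b}) c d"
  then obtain T where T: "connected T" "T \<subseteq> S1 - {a,b}" "c \<in> T" "d \<in> T"
    unfolding connected_component_def by blast
  have cont: "continuous_on T (side a b)" unfolding side_def by (intro continuous_intros)
  have ci: "connected (side a b ` T)" by (rule connected_continuous_image[OF cont T(1)])
  have nz: "side a b z \<noteq> 0" if "z \<in> T" for z
    using side_zero_iff[OF assms(1,2)] that T(2) assms(3) by auto
  show "0 < side a b c * side a b d"
  proof (rule ccontr)
    assume "\<not> 0 < side a b c * side a b d"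
    then have "side a b c * side a b d \<le> 0" by simp
    then have "0 \<in> side a b ` T"
      using connected_contains_Icc[OF ci, of "side a b c" "side a b d"]
            connected_contains_Icc[OF ci, of "side a b d" "side a b c"] T(3,4)
      by (auto simp: mult_le_0_iff subset_eq)
    then show False using nz by auto
  qed
next
  assume pos: "0 < side a b c * side a b d"
  have cS: "c \<in> S1" "d \<in> S1" using assms by auto
  have eq: "btw (ang a) (ang b) (ang c) = btw (ang a) (ang b) (ang d)"
    using side_prod_pos[OF assms(1,2) cS] pos by simp
  have ne: "ang a \<noteq> ang b" using assms ang_inj by blast
  show "connected_component (S1 - {a,b}) c d"
  proof (cases "ang a < ang b")
    case True
    show ?thesis
    proof (cases "btw (ang a) (ang b) (ang c)")
      case b: True
      then show ?thesis unfolding connected_component_def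
        using arc_mem(1)[OF assms(1,2) True assms(4)] arc_mem(1)[OF assms(1,2) True assms(5)] eq
          arc_sub(1)[OF assms(1,2)] True connected_arcs by (metis less_imp_le)
    next
      case b: False
      then show ?thesis unfolding connected_component_def
        using arc_mem(2)[OF assms(1,2) True assms(4)] arc_mem(2)[OF assms(1,2) True assms(5)] eq
          arc_sub(2)[OF assms(1,2)] True connected_arcs by (metis less_imp_le)
    qed
  next
    case False
    then have lt: "ang b < ang a" using ne by auto
    have as: "c \<in> S1 - {b,a}" "d \<in> S1 - {b,a}" using assms by auto
    have eq': "btw (ang b) (ang a) (ang c) = btw (ang b) (ang a) (ang d)" using eq by (auto simp: btw_def)
    have "{a,b} = {b,a}" by auto
    then show ?thesis
    proof (cases "btw (ang b) (ang a) (ang c)")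
      case b: True
      then show ?thesis unfolding connected_component_def
        using arc_mem(1)[OF assms(2,1) lt as(1)] arc_mem(1)[OF assms(2,1) lt as(2)] eq'
          arc_sub(1)[OF assms(2,1)] lt connected_arcs \<open>{a,b} = {b,a}\<close> by (metis less_imp_le)
    next
      case b: False
      then show ?thesis unfolding connected_component_def
        using arc_mem(2)[OF assms(2,1) lt as(1)] arc_mem(2)[OF assms(2,1) lt as(2)] eq'
          arc_sub(2)[OF assms(2,1)] lt connected_arcs \<open>{a,b} = {b,a}\<close> by (metis less_imp_le)
    qed
  qed
qed

lemma linked_side:
  "linked a b c d \<longleftrightarrow> a \<in> S1 \<and> b \<in> S1 \<and> c \<in> S1 \<and> d \<in> S1 \<and> side a b c * side a b d < 0"
proof
  assume L: "linked a b c d"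
  then have m: "a \<in> S1" "b \<in> S1" "c \<in> S1" "d \<in> S1" "a \<noteq> b" "c \<in> S1 - {a,b}" "d \<in> S1 - {a,b}"
    unfolding linked_def by auto
  have "\<not> 0 < side a b c * side a b d" using L comp_iff[OF m(1,2,5,6,7)] unfolding linked_def by auto
  moreover have "side a b c \<noteq> 0" "side a b d \<noteq> 0" using side_zero_iff m by auto
  ultimately show "a \<in> S1 \<and> b \<in> S1 \<and> c \<in> S1 \<and> d \<in> S1 \<and> side a b c * side a b d < 0"
    using m by (simp add: linorder_not_less mult_le_0_iff) (smt (verit) mult_pos_neg mult_neg_pos)
next
  assume A: "a \<in> S1 \<and> b \<in> S1 \<and> c \<in> S1 \<and> d \<in> S1 \<and> side a b c * side a b d < 0"
  then have nz: "side a b c \<noteq> 0" "side a b d \<noteq> 0" by auto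
  have ab: "a \<noteq> b" using nz by auto
  have cd: "c \<notin> {a,b}" "d \<notin> {a,b}" using nz by auto
  have "c \<noteq> d" using A by (metis not_square_less_zero)
  moreover have "\<not> connected_component (S1 - {a,b}) c d"
    using comp_iff[OF _ _ ab, of c d] A cd by auto
  ultimately show "linked a b c d" unfolding linked_def using A ab cd by auto
qed


definition Lk :: "real \<Rightarrow> real \<Rightarrow> real \<Rightarrow> real \<Rightarrow> bool" where
  "Lk x y z w \<longleftrightarrow> x \<noteq> y \<and> z \<noteq> x \<and> z \<noteq> y \<and> w \<noteq> x \<and> w \<noteq> y \<and> (btw x y z \<noteq> btw x y w)"

lemma btw_alt: "btw x y z \<longleftrightarrow> (x < z \<and> z < y) \<or> (y < z \<and> z < x)"
  by (auto simp: btw_def min_def max_def)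

lemma Lk_sym1: "Lk x y z w \<Longrightarrow> Lk z w x y"
  unfolding Lk_def btw_alt by (smt (verit))
lemma Lk_sym2: "Lk y x z w = Lk x y z w" "Lk x y w z = Lk x y z w"
  unfolding Lk_def btw_alt by blast+

lemma C1: "a \<noteq> b \<Longrightarrow> b \<noteq> c \<Longrightarrow> x \<noteq> b \<Longrightarrow> y \<noteq> b \<Longrightarrow> Lk a c x y \<Longrightarrow> Lk a b x y \<or> Lk b c x y"
  unfolding Lk_def btw_alt by (smt (verit))

lemma C2: "Lk a b c d \<Longrightarrow> Lk a c u v \<Longrightarrow> Lk a b u v \<or> Lk c d u v"
  unfolding Lk_def btw_alt by (smt (verit))

lemma C3: "p \<noteq> q1 \<Longrightarrow> p \<noteq> q2 \<Longrightarrow> p \<noteq> q3 \<Longrightarrow> q1 \<noteq> q2 \<Longrightarrow> q1 \<noteq> q3 \<Longrightarrow> q2 \<noteq> q3 \<Longrightarrow>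
  Lk p q1 q2 q3 \<or> Lk p q2 q1 q3 \<or> Lk p q3 q1 q2"
  unfolding Lk_def btw_alt by (smt (verit))
definition sh :: "real \<Rightarrow> real \<Rightarrow> real" where
  "sh s x = (if s \<le> x then x - s else x - s + 2*pi)"

lemma Lk_sh:
  assumes "0 \<le> s" "s < 2*pi" "0 \<le> x" "x < 2*pi" "0 \<le> y" "y < 2*pi"
     "0 \<le> z" "z < 2*pi" "0 \<le> w" "w < 2*pi"
  shows "Lk (sh s x) (sh s y) (sh s z) (sh s w) = Lk x y z w"
  using assms pi_gt_zero unfolding Lk_def btw_alt sh_def by (smt (verit))
definition rang :: "complex \<Rightarrow> complex \<Rightarrow> real" where
  "rang q z = sh (ang q) (ang z)"

lemma rang_range: "0 \<le> rang q z" "rang q z < 2*pi"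
  using ang_range[of q] ang_range[of z] unfolding rang_def sh_def by auto

lemma rang_self[simp]: "rang q q = 0"
  unfolding rang_def sh_def by simp

lemma S1_mult: "a \<in> S1 \<Longrightarrow> b \<in> S1 \<Longrightarrow> a * b \<in> S1"
  by (simp add: S1_iff norm_mult)

lemma cis_rang: assumes "q \<in> S1" "z \<in> S1" shows "q * cis (rang q z) = z"
proof -
  have "cis (rang q z) = cis (ang z - ang q)"
    unfolding rang_def sh_def using cis_2pi[of "ang z - ang q"] by auto
  also have "\<dots> = cis (ang z) * cis (- ang q)" by (simp add: cis_mult)
  finally have "q * cis (rang q z) = cis (ang q) * cis (- ang q) * cis (ang z)"
    using cis_ang[OF assms(1)] by (simp add: ac_simps)
  also have "\<dots> = z" using cis_ang[OF assms(2)] by (simp add: cis_mult)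
  finally show ?thesis .
qed

lemma rang_mul: assumes "q \<in> S1" "0 \<le> t" "t < 2*pi" shows "rang q (q * cis t) = t"
proof -
  have m: "q * cis t \<in> S1" by (rule S1_mult[OF assms(1) cis_S1])
  have o0: "q \<noteq> 0" using assms(1) by (auto simp: S1_iff)
  have "q * cis (rang q (q * cis t)) = q * cis t" using cis_rang[OF assms(1) m] .
  then have "cis (rang q (q * cis t)) = cis t" using o0 by simp
  then show ?thesis using cis_inj rang_range[of q "q * cis t"] assms by fastforce
qed

lemma rang_inj: assumes "q \<in> S1" "a \<in> S1" "b \<in> S1" "rang q a = rang q b" shows "a = b"
  using cis_rang assms by metis

lemma linked_ang: "linked a b c d \<longleftrightarrow> a \<in> S1 \<and> b \<in> S1 \<and> c \<in> S1 \<and> d \<in> S1 \<and> Lk (ang a) (ang b) (ang c) (ang d)"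
  unfolding linked_side Lk_def using side_prod_neg by blast

lemma linked_rang:
  assumes "q \<in> S1"
  shows "linked a b c d \<longleftrightarrow> a \<in> S1 \<and> b \<in> S1 \<and> c \<in> S1 \<and> d \<in> S1 \<and> Lk (rang q a) (rang q b) (rang q c) (rang q d)"
  unfolding linked_ang rang_def using Lk_sh ang_range by metis

lemma linked_S1: "linked a b c d \<Longrightarrow> a \<in> S1 \<and> b \<in> S1 \<and> c \<in> S1 \<and> d \<in> S1"
  unfolding linked_def by auto

lemma linked_swap: "linked a b c d \<Longrightarrow> linked c d a b"
  unfolding linked_ang using Lk_sym1 by blast

lemma linked_sym: "linked b a c d \<longleftrightarrow> linked a b c d" "linked a b d c \<longleftrightarrow> linked a b c d"
  unfolding linked_ang using Lk_sym2 by blast+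

lemma linked_distinct: "linked a b c d \<Longrightarrow> a \<noteq> b \<and> c \<noteq> d \<and> a \<noteq> c \<and> a \<noteq> d \<and> b \<noteq> c \<and> b \<noteq> d"
  unfolding linked_def by auto

lemma cramer2: fixes u v h :: complex
  shows "of_real (Im (cnj u * v)) * h = of_real (Im (cnj u * h)) * v - of_real (Im (cnj v * h)) * u"
  by (simp add: complex_eq_iff algebra_simps)

lemma lin_comb_div: fixes u v :: complex and X Y D :: real
  shows "of_real (- Y / D) * u + of_real (X / D) * v = (of_real X * v - of_real Y * u) / of_real D"
  by (simp add: diff_divide_distrib algebra_simps)

lemma Im_cnj_bound: "\<bar>Im (cnj u * h)\<bar> \<le> cmod u * cmod h"
  using abs_Im_le_cmod[of "cnj u * h"] by (simp add: norm_mult)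

lemma seg_in_convex: assumes "convex C" "a \<in> C" "b \<in> C" "0 \<le> t" "t \<le> 1"
  shows "a + of_real t * (b - a) \<in> C"
proof -
  have "(1 - t) *\<^sub>R a + t *\<^sub>R b \<in> C" using assms convexD by (metis add.commute diff_add_cancel diff_ge_0_iff_ge)
  moreover have "(1 - t) *\<^sub>R a + t *\<^sub>R b = a + of_real t * (b - a)"
    by (simp add: scaleR_conv_of_real algebra_simps)
  ultimately show ?thesis by simp
qed

lemma cross_interior:
  fixes a b z1 z2 p :: complex
  assumes C: "convex C" "a \<in> C" "b \<in> C" "z1 \<in> C" "z2 \<in> C"
    and p1: "p = a + of_real l * (b - a)" "0 < l" "l < 1"
    and p2: "p = z1 + of_real s * (z2 - z1)" "0 < s" "s < 1"
    and D: "Im (cnj (b - a) * (z2 - z1)) \<noteq> 0"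
  shows "p \<in> interior C"
proof -
  define u where "u = b - a"
  define v where "v = z2 - z1"
  define D where "D = Im (cnj u * v)"
  have D0: "D \<noteq> 0" using assms unfolding D_def u_def v_def by simp
  define \<delta> where "\<delta> = min (min l (1 - l)) (min s (1 - s))"
  have \<delta>0: "\<delta> > 0" using p1 p2 unfolding \<delta>_def by auto
  define K where "K = 2 * (cmod u + cmod v) + 1"
  have K0: "K > 0" unfolding K_def by (intro add_nonneg_pos) auto
  define \<epsilon> where "\<epsilon> = \<delta> * \<bar>D\<bar> / K"
  have \<epsilon>0: "\<epsilon> > 0" unfolding \<epsilon>_def using \<delta>0 D0 K0 by simp
  have "ball p \<epsilon> \<subseteq> C"
  proof
    fix y assume y: "y \<in> ball p \<epsilon>"
    define h where "h = y - p"
    have hn: "cmod h < \<epsilon>" using y unfolding h_def by (simp add: dist_norm norm_minus_commute)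
    define \<alpha> where "\<alpha> = - Im (cnj v * h) / D"
    define \<beta> where "\<beta> = Im (cnj u * h) / D"
    have hrep: "h = of_real \<alpha> * u + of_real \<beta> * v"
    proof -
      have cr: "of_real D * h = of_real (Im (cnj u * h)) * v - of_real (Im (cnj v * h)) * u"
        unfolding D_def by (rule cramer2)
      have "of_real \<alpha> * u + of_real \<beta> * v = (of_real (Im (cnj u * h)) * v - of_real (Im (cnj v * h)) * u) / of_real D"
        unfolding \<alpha>_def \<beta>_def by (rule lin_comb_div)
      also have "\<dots> = of_real D * h / of_real D" using cr by simp
      also have "\<dots> = h" using D0 by simp
      finally show ?thesis by simp
    qed
    have bnd: "2 * \<bar>Im (cnj w * h)\<bar> / \<bar>D\<bar> \<le> \<delta>" if "cmod w \<le> K / 2" for w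
    proof -
      have "2 * \<bar>Im (cnj w * h)\<bar> \<le> 2 * (cmod w * cmod h)" using Im_cnj_bound[of w h] by simp
      also have "\<dots> = (2 * cmod w) * cmod h" by simp
      also have "\<dots> \<le> K * cmod h" using that by (intro mult_right_mono) auto
      also have "\<dots> \<le> K * \<epsilon>" using hn K0 by simp
      also have "\<dots> = \<delta> * \<bar>D\<bar>" unfolding \<epsilon>_def using K0 by simp
      finally show ?thesis using D0 by (simp add: divide_le_eq)
    qed
    have "cmod u \<le> K / 2" "cmod v \<le> K / 2" unfolding K_def by auto
    then have ab: "2 * \<bar>\<alpha>\<bar> \<le> \<delta>" "2 * \<bar>\<beta>\<bar> \<le> \<delta>"
    proof -
      have "\<bar>\<alpha>\<bar> = \<bar>Im (cnj v * h)\<bar> / \<bar>D\<bar>" unfolding \<alpha>_def by (simp only: abs_divide abs_minus_cancel)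
      moreover have "\<bar>\<beta>\<bar> = \<bar>Im (cnj u * h)\<bar> / \<bar>D\<bar>" unfolding \<beta>_def by (simp only: abs_divide)
      ultimately show "2 * \<bar>\<alpha>\<bar> \<le> \<delta>" "2 * \<bar>\<beta>\<bar> \<le> \<delta>" using bnd[of v] bnd[of u] \<open>cmod u \<le> K / 2\<close> \<open>cmod v \<le> K / 2\<close>
        by simp_all
    qed
    have q1: "a + of_real (l + 2 * \<alpha>) * u \<in> C"
      unfolding u_def using ab \<delta>_def by (intro seg_in_convex C) (auto simp: abs_if split: if_splits)
    have q2: "z1 + of_real (s + 2 * \<beta>) * v \<in> C"
      unfolding v_def using ab \<delta>_def by (intro seg_in_convex C) (auto simp: abs_if split: if_splits)
    have "y = (1/2) *\<^sub>R (a + of_real (l + 2 * \<alpha>) * u) + (1/2) *\<^sub>R (z1 + of_real (s + 2 * \<beta>) * v)"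
    proof -
      have "y = p + h" unfolding h_def by simp
      also have "p = (1/2) * (a + of_real l * u) + (1/2) * (z1 + of_real s * v)"
      proof -
        have "a + of_real l * u = p" "z1 + of_real s * v = p" using p1 p2 u_def v_def by simp_all
        then show ?thesis by simp
      qed
      finally show ?thesis unfolding hrep by (simp add: scaleR_conv_of_real algebra_simps)
    qed
    then show "y \<in> C" using convexD[OF C(1) q1 q2, of "1/2" "1/2"] by simp
  qed
  then show ?thesis using \<epsilon>0 mem_interior by blast
qed

lemma side_affine: "side a b (x + of_real t * (y - x)) = side a b x + t * (side a b y - side a b x)"
  by (simp add: side_def algebra_simps)

lemma side_diff: "side a b y - side a b x = Im (cnj (b - a) * (y - x))"
  by (simp add: side_def algebra_simps)

lemma on_line:
  assumes "a \<noteq> b" "side a b p = 0"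
  shows "p = a + of_real (Re (cnj (b - a) * (p - a)) / (cmod (b - a))^2) * (b - a)"
proof -
  define w where "w = cnj (b - a) * (p - a)"
  have Iw: "Im w = 0" using assms(2) unfolding w_def side_def by simp
  then have wr: "w = of_real (Re w)" by (simp add: complex_eq_iff)
  have nz: "cmod (b - a) \<noteq> 0" "cnj (b - a) \<noteq> 0" using assms(1) by auto
  have "cnj (b - a) * (of_real (Re w / (cmod (b - a))^2) * (b - a)) = of_real (Re w / (cmod (b - a))^2) * ((b - a) * cnj (b - a))"
    by (simp add: ac_simps)
  also have "\<dots> = of_real (Re w / (cmod (b - a))^2) * of_real ((cmod (b - a))^2)"
    by (simp only: complex_norm_square[symmetric] of_real_power)
  also have "\<dots> = of_real (Re w)" using nz by (simp flip: of_real_mult)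
  also have "\<dots> = cnj (b - a) * (p - a)" using wr w_def by simp
  finally have "p - a = of_real (Re w / (cmod (b - a))^2) * (b - a)"
    using nz(2) mult_left_cancel by metis
  then show ?thesis unfolding w_def by (simp add: algebra_simps)
qed

lemma seg_mem: "0 \<le> t \<Longrightarrow> t \<le> 1 \<Longrightarrow> a + of_real t * (b - a) \<in> closed_segment a b"
  unfolding closed_segment_def by (auto simp: scaleR_conv_of_real algebra_simps intro!: exI[of _ t])

lemma ratio_01: fixes A B :: real assumes "A * B < 0" shows "0 < A / (A - B)" "A / (A - B) < 1"
  using assms by (auto simp: mult_less_0_iff divide_less_eq zero_less_divide_iff)

lemma one_side:
  assumes sub: "\<nu> \<subseteq> S1" and ab: "a \<in> \<nu>" "b \<in> \<nu>" "a \<noteq> b"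
    and fr: "closed_segment a b \<subseteq> frontier (convex hull \<nu>)"
  shows "(\<forall>z\<in>\<nu>. 0 \<le> side a b z) \<or> (\<forall>z\<in>\<nu>. side a b z \<le> 0)"
proof (rule ccontr)
  assume "\<not> ?thesis"
  then obtain z1 z2 where z: "z1 \<in> \<nu>" "z2 \<in> \<nu>" "side a b z1 > 0" "side a b z2 < 0"
    by (auto simp: not_le)
  have S: "a \<in> S1" "b \<in> S1" "z1 \<in> S1" "z2 \<in> S1" using sub ab z by auto
  have "side a b z1 * side a b z2 < 0" using z by (simp add: mult_pos_neg)
  then have L: "linked a b z1 z2" using S linked_side by blast
  then have L2: "side z1 z2 a * side z1 z2 b < 0" using linked_swap linked_side by blast
  define s where "s = side a b z1 / (side a b z1 - side a b z2)"
  have s01: "0 < s" "s < 1" unfolding s_def using ratio_01 \<open>side a b z1 * side a b z2 < 0\<close> by auto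
  define p where "p = z1 + of_real s * (z2 - z1)"
  have sp: "side a b p = 0" unfolding p_def side_affine s_def using z by (simp add: field_simps)
  define l where "l = Re (cnj (b - a) * (p - a)) / (cmod (b - a))^2"
  have pl: "p = a + of_real l * (b - a)" unfolding l_def by (rule on_line[OF ab(3) sp])
  have "side z1 z2 p = 0" unfolding p_def side_def by (simp add: algebra_simps)
  then have "side z1 z2 a + l * (side z1 z2 b - side z1 z2 a) = 0" using pl side_affine by metis
  then have "l = side z1 z2 a / (side z1 z2 a - side z1 z2 b)"
    using L2 by (auto simp: field_simps mult_less_0_iff)
  then have l01: "0 < l" "l < 1" using ratio_01[OF L2] by auto
  have D: "Im (cnj (b - a) * (z2 - z1)) \<noteq> 0" using side_diff[of a b z2 z1] z by simp
  have C: "convex (convex hull \<nu>)" "a \<in> convex hull \<nu>" "b \<in> convex hull \<nu>" "z1 \<in> convex hull \<nu>" "z2 \<in> convex hull \<nu>"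
    using ab z hull_subset[of \<nu> convex] by auto
  have "p \<in> interior (convex hull \<nu>)"
    by (rule cross_interior[OF C pl l01 p_def s01 D])
  moreover have "p \<in> frontier (convex hull \<nu>)" using fr seg_mem[of l a b] l01 pl by auto
  ultimately show False unfolding frontier_def by auto
qed
lemma three_elem:
  assumes "\<And>x y z. x \<in> Q \<Longrightarrow> y \<in> Q \<Longrightarrow> z \<in> Q \<Longrightarrow> x \<noteq> y \<Longrightarrow> y \<noteq> z \<Longrightarrow> x \<noteq> z \<Longrightarrow> False"
  shows "finite Q \<and> card Q \<le> 2"
proof (rule ccontr)
  assume "\<not> (finite Q \<and> card Q \<le> 2)"
  then obtain B where B: "B \<subseteq> Q" "card B = 3"
  proof (cases "finite Q")
    case True
    then have "3 \<le> card Q" using \<open>\<not> (finite Q \<and> card Q \<le> 2)\<close> by auto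
    then show ?thesis using obtain_subset_with_card_n that by metis
  next
    case False
    then show ?thesis using infinite_arbitrarily_large[of Q 3] that by auto
  qed
  then obtain x y z where "B = {x,y,z}" "x \<noteq> y" "y \<noteq> z" "x \<noteq> z" using card_3_iff by metis
  then show False using assms B by auto
qed

lemma equiv_sub: "equiv S1 R \<Longrightarrow> R `` {x} \<subseteq> S1"
  unfolding equiv_def refl_on_def by auto

lemma Lam_memD:
  assumes E: "equiv S1 R" and m: "(p, q) \<in> Lam R"
  defines "\<nu> \<equiv> R `` {p}"
  shows "q \<in> \<nu> \<and> p \<in> \<nu> \<and> p \<noteq> q \<and> ((finite \<nu> \<and> card \<nu> = 2 \<and> {p, q} = \<nu>) \<or>
     ((infinite \<nu> \<or> card \<nu> > 2) \<and> closed_segment p q \<subseteq> frontier (convex hull \<nu>)))"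
proof -
  obtain x where x: "x \<in> S1" and
    c: "(finite (R``{x}) \<and> card (R``{x}) = 2 \<and> {p, q} = R``{x} \<and> p \<noteq> q) \<or>
      ((infinite (R``{x}) \<or> card (R``{x}) > 2) \<and> p \<in> R``{x} \<and> q \<in> R``{x} \<and> p \<noteq> q \<and>
        closed_segment p q \<subseteq> frontier (convex hull (R``{x})))"
    using m unfolding Lam_def Let_def by auto
  have "p \<in> R``{x}" using c by auto
  then have "(x, p) \<in> R" by auto
  then have eq: "R``{x} = \<nu>" unfolding \<nu>_def using equiv_class_eq[OF E] by blast
  show ?thesis using c unfolding eq by auto
qed

lemma partA: assumes "boundary_lamination \<Lambda>" shows "at_most_two_leaves \<Lambda>"
proof -
  obtain R where R: "laminar_relation R" and L: "\<Lambda> = Lam R"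
    using assms unfolding boundary_lamination_def by auto
  have E: "equiv S1 R" using R unfolding laminar_relation_def by auto
  show ?thesis unfolding at_most_two_leaves_def
  proof
    fix p assume pS: "p \<in> S1"
    define \<nu> where "\<nu> = R `` {p}"
    have sub: "\<nu> \<subseteq> S1" unfolding \<nu>_def by (rule equiv_sub[OF E])
    let ?Q = "{q. (p, q) \<in> \<Lambda>}"
    show "finite ?Q \<and> card ?Q \<le> 2"
    proof (cases "finite \<nu> \<and> card \<nu> = 2")
      case True
      have "?Q \<subseteq> \<nu> - {p}" using Lam_memD[OF E] unfolding L \<nu>_def by auto
      moreover have "card (\<nu> - {p}) = 1" "finite (\<nu> - {p})" using True Lam_memD[OF E]
        E pS unfolding \<nu>_def equiv_def refl_on_def by auto
      ultimately show ?thesis by (metis card_mono finite_subset one_le_numeral order_trans)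
    next
      case False
      have Qm: "q \<in> \<nu> \<and> p \<noteq> q \<and> closed_segment p q \<subseteq> frontier (convex hull \<nu>)" if "q \<in> ?Q" for q
        using Lam_memD[OF E, of p q] that False unfolding L \<nu>_def by auto
      have pn: "p \<in> \<nu>" using E pS unfolding \<nu>_def equiv_def refl_on_def by auto
      have os: "(\<forall>z\<in>\<nu>. 0 \<le> side p q z) \<or> (\<forall>z\<in>\<nu>. side p q z \<le> 0)" if "q \<in> ?Q" for q
        using one_side[OF sub pn] Qm[OF that] by auto
      have bad: "\<not> linked p q1 q2 q3" if "q1 \<in> ?Q" "q2 \<in> ?Q" "q3 \<in> ?Q" for q1 q2 q3
      proof
        assume "linked p q1 q2 q3"
        then have "side p q1 q2 * side p q1 q3 < 0" using linked_side by blast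
        then show False using os[OF that(1)] Qm[OF that(2)] Qm[OF that(3)]
          by (auto simp: mult_less_0_iff)
      qed
      show ?thesis
      proof (rule three_elem)
        fix x y z assume xyz: "x \<in> ?Q" "y \<in> ?Q" "z \<in> ?Q" "x \<noteq> y" "y \<noteq> z" "x \<noteq> z"
        have S: "x \<in> S1" "y \<in> S1" "z \<in> S1" using Qm xyz sub by auto
        have ne: "ang p \<noteq> ang x" "ang p \<noteq> ang y" "ang p \<noteq> ang z" "ang x \<noteq> ang y" "ang x \<noteq> ang z" "ang y \<noteq> ang z"
          using ang_inj S pS Qm xyz by metis+
        have "Lk (ang p) (ang x) (ang y) (ang z) \<or> Lk (ang p) (ang y) (ang x) (ang z) \<or> Lk (ang p) (ang z) (ang x) (ang y)"
          using C3[OF ne] .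
        then have "linked p x y z \<or> linked p y x z \<or> linked p z x y" using linked_ang S pS by blast
        then show False using bad xyz by blast
      qed
    qed
  qed
qed

definition cf :: "(complex \<times> complex) set \<Rightarrow> complex \<Rightarrow> complex \<Rightarrow> bool" where
  "cf \<Lambda> a b \<longleftrightarrow> (\<forall>c d. (c, d) \<in> \<Lambda> \<longrightarrow> \<not> linked a b c d)"

definition NR :: "(complex \<times> complex) set \<Rightarrow> (complex \<times> complex) set" where
  "NR \<Lambda> = {(a, b). a \<in> S1 \<and> b \<in> S1 \<and> (a = b \<or> (a, b) \<in> \<Lambda> \<or> cf \<Lambda> a b)}"

lemma open_linked_pairs: "open {(x, y). side a b x * side a b y < 0}"
proof -
  have "open {p. (\<lambda>p. side a b (fst p) * side a b (snd p)) p < (\<lambda>p. 0) p}"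
    unfolding side_def by (intro open_Collect_less continuous_intros)
  moreover have "{(x, y). side a b x * side a b y < 0} = {p. side a b (fst p) * side a b (snd p) < 0}" by auto
  ultimately show ?thesis by simp
qed

lemma open_linked_pairs2: "open {(x, y). side x y c * side x y d < 0}"
proof -
  have "open {p. (\<lambda>p. side (fst p) (snd p) c * side (fst p) (snd p) d) p < (\<lambda>p. 0) p}"
    unfolding side_def by (intro open_Collect_less continuous_intros)
  moreover have "{(x, y). side x y c * side x y d < 0} = {p. side (fst p) (snd p) c * side (fst p) (snd p) d < 0}" by auto
  ultimately show ?thesis by simp
qed

lemma open_offd: "open {(x::complex, y). x \<noteq> y}"
proof -
  have "open {p::complex\<times>complex. fst p \<noteq> snd p}"
    by (intro open_Collect_neq continuous_intros)
  moreover have "{(x::complex, y). x \<noteq> y} = {p. fst p \<noteq> snd p}" by auto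
  ultimately show ?thesis by simp
qed

locale lamctx =
  fixes \<Lambda> :: "(complex \<times> complex) set"
  assumes lam: "lamination \<Lambda>"
    and fin: "\<And>p. p \<in> S1 \<Longrightarrow> finite {q. (p, q) \<in> \<Lambda>}"
    and noiso: "\<And>l. l \<in> \<Lambda> \<Longrightarrow> l islimpt \<Lambda>"
begin

lemma sub: "\<Lambda> \<subseteq> offdiag" and symL: "sym \<Lambda>" and clo: "closedin (top_of_set offdiag) \<Lambda>"
  and unl: "(a, b) \<in> \<Lambda> \<Longrightarrow> (c, d) \<in> \<Lambda> \<Longrightarrow> \<not> linked a b c d"
  using lam unfolding lamination_def by auto

lemma leafD: "(a, b) \<in> \<Lambda> \<Longrightarrow> a \<in> S1 \<and> b \<in> S1 \<and> a \<noteq> b"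
  using sub unfolding offdiag_def by auto

lemma leaf_sym: "(a, b) \<in> \<Lambda> \<Longrightarrow> (b, a) \<in> \<Lambda>"
  using symL unfolding sym_def by auto

abbreviation "N \<equiv> NR \<Lambda>"

lemma N_S1: "(a, b) \<in> N \<Longrightarrow> a \<in> S1 \<and> b \<in> S1"
  unfolding NR_def by auto

lemma cf_sym: "cf \<Lambda> a b \<Longrightarrow> cf \<Lambda> b a"
  unfolding cf_def using linked_sym by blast

lemma N_sym: "(a, b) \<in> N \<Longrightarrow> (b, a) \<in> N"
  unfolding NR_def using cf_sym leaf_sym by auto

lemma N_refl: "a \<in> S1 \<Longrightarrow> (a, a) \<in> N"
  unfolding NR_def by auto

lemma leaf_N: "(a, b) \<in> \<Lambda> \<Longrightarrow> (a, b) \<in> N"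
  unfolding NR_def using leafD by auto

lemma N_nocross: "(a, b) \<in> N \<Longrightarrow> (c, d) \<in> \<Lambda> \<Longrightarrow> \<not> linked a b c d"
  unfolding NR_def cf_def using unl linked_distinct by blast

lemma N_nocross': "(a, b) \<in> N \<Longrightarrow> (c, d) \<in> \<Lambda> \<Longrightarrow> \<not> linked c d a b"
  using N_nocross linked_swap by blast

lemma trans_aux:
  assumes ab: "(a, b) \<in> N" and bc: "(b, c) \<in> N" and d: "a \<noteq> b" "b \<noteq> c"
    and xy: "(x, y) \<in> \<Lambda>" "x \<noteq> b" "y \<noteq> b"
  shows "\<not> linked a c x y"
proof
  assume L: "linked a c x y"
  have S: "a \<in> S1" "b \<in> S1" "c \<in> S1" "x \<in> S1" "y \<in> S1" using N_S1 ab bc leafD xy by auto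
  have "Lk (ang a) (ang c) (ang x) (ang y)" using L linked_ang by blast
  moreover have "ang a \<noteq> ang b" "ang b \<noteq> ang c" "ang x \<noteq> ang b" "ang y \<noteq> ang b"
    using ang_inj S d xy by metis+
  ultimately have "Lk (ang a) (ang b) (ang x) (ang y) \<or> Lk (ang b) (ang c) (ang x) (ang y)"
    using C1 by blast
  then have "linked a b x y \<or> linked b c x y" using linked_ang S by blast
  then show False using N_nocross ab bc xy by blast
qed

lemma finite_min_dist:
  assumes "finite F" "y \<notin> F"
  obtains e where "e > 0" "\<And>q. q \<in> F \<Longrightarrow> e \<le> dist q y"
proof (cases "F = {}")
  case True then show ?thesis using that[of 1] by auto
next
  case False
  define e where "e = Min ((\<lambda>q. dist q y) ` F)"
  have "e > 0" unfolding e_def using assms False by (subst Min_gr_iff) auto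
  moreover have "\<And>q. q \<in> F \<Longrightarrow> e \<le> dist q y" unfolding e_def using assms by auto
  ultimately show ?thesis using that by blast
qed

lemma N_trans:
  assumes ab: "(a, b) \<in> N" and bc: "(b, c) \<in> N"
  shows "(a, c) \<in> N"
proof -
  have S: "a \<in> S1" "b \<in> S1" "c \<in> S1" using N_S1 ab bc by auto
  consider "a = b" | "b = c" | "a = c" | "a \<noteq> b" "b \<noteq> c" "a \<noteq> c" by blast
  then show ?thesis
  proof cases
    case 1 then show ?thesis using bc by simp
  next
    case 2 then show ?thesis using ab by simp
  next
    case 3 then show ?thesis using N_refl S by simp
  next
    case 4
    have "cf \<Lambda> a c"
      unfolding cf_def
    proof (intro allI impI)
      fix x y assume xy: "(x, y) \<in> \<Lambda>"
      have main: "\<not> linked a c x y" if xy: "(x, y) \<in> \<Lambda>" and xb: "x = b" for x y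
      proof
        assume L: "linked a c x y"
        have yb: "y \<noteq> b" using leafD xy xb by auto
        have lim: "(x, y) islimpt \<Lambda>" using noiso xy by auto
        obtain e0 where e0: "e0 > 0" "\<And>q. q \<in> {q. (b, q) \<in> \<Lambda>} - {y} \<Longrightarrow> e0 \<le> dist q y"
          using finite_min_dist[of "{q. (b, q) \<in> \<Lambda>} - {y}" y] fin[OF S(2)] by auto
        have sp: "side a c x * side a c y < 0" using L linked_side by blast
        have "(x, y) \<in> {(x, y). side a c x * side a c y < 0}" using sp by simp
        then obtain e1 where e1: "e1 > 0" "ball (x, y) e1 \<subseteq> {(x, y). side a c x * side a c y < 0}"
          using open_linked_pairs open_contains_ball by blast
        define e where "e = min e0 (min e1 (dist y b))"
        have e: "e > 0" unfolding e_def using e0 e1 yb by auto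
        obtain x' y' where l': "(x', y') \<in> \<Lambda>" "(x', y') \<noteq> (x, y)" "dist (x', y') (x, y) < e"
        proof -
          obtain l' where "l' \<in> \<Lambda>" "l' \<noteq> (x, y)" "dist l' (x, y) < e"
            using lim e unfolding islimpt_approachable by blast
          then show ?thesis using that[of "fst l'" "snd l'"] by auto
        qed
        have dy: "dist y' y < e" using dist_snd_le[of "(x', y')" "(x, y)"] l' by simp
        have "(x', y') \<in> ball (x, y) e1" using l' e_def by (auto simp: dist_commute)
        then have sp': "side a c x' * side a c y' < 0" using e1 by auto
        have S': "x' \<in> S1" "y' \<in> S1" using leafD l' by auto
        have L': "linked a c x' y'" using sp' S' S linked_side by blast
        have "x' \<noteq> b"
        proof
          assume "x' = b"
          then have "y' \<in> {q. (b, q) \<in> \<Lambda>} - {y}" using l' xb by auto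
          then have "e0 \<le> dist y' y" using e0 by auto
          then show False using dy e_def by auto
        qed
        moreover have "y' \<noteq> b"
        proof
          assume "y' = b" then have "dist b y < dist y b" using dy e_def by auto
          then show False by (simp add: dist_commute)
        qed
        ultimately show False using trans_aux[OF ab bc 4(1,2) l'(1)] L' by blast
      qed
      show "\<not> linked a c x y"
      proof (cases "x = b \<or> y = b")
        case True
        then show ?thesis
        proof
          assume "x = b" then show ?thesis using main xy by blast
        next
          assume "y = b" then show ?thesis using main[of y x] leaf_sym xy linked_sym by blast
        qed
      next
        case False
        then show ?thesis using trans_aux[OF ab bc 4(1,2) xy] by blast
      qed
    qed
    then show ?thesis unfolding NR_def using S by auto
  qed
qed

lemma N_equiv: "equiv S1 N"
proof -
  have "N \<subseteq> S1 \<times> S1" using N_S1 by auto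
  then show ?thesis unfolding equiv_def refl_on_def sym_def trans_def
    using N_refl N_sym N_trans by blast
qed

end

lemma S1_closed: "closed S1"
  unfolding S1_def by simp

lemma perfect_countable:
  fixes L C U :: "(complex \<times> complex) set"
  assumes C: "closed C" "L = offdiag \<inter> C" and perf: "\<And>l. l \<in> L \<Longrightarrow> l islimpt L"
    and U: "open U" and w: "w \<in> L" "w \<in> U" and cnt: "countable (L \<inter> U)"
  shows False
proof -
  define V where "V = U \<inter> {(x, y). x \<noteq> y}"
  have oO: "open V" unfolding V_def using U open_offd by auto
  have wO: "w \<in> V" using w C unfolding V_def offdiag_def by auto
  obtain r where r: "r > 0" "cball w r \<subseteq> V" using open_contains_cball oO wO by blast
  define K where "K = C \<inter> (S1 \<times> S1) \<inter> cball w r"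
  have KL: "K \<subseteq> L \<inter> U" using r C unfolding K_def V_def offdiag_def by auto
  then have cK: "countable K" using cnt countable_subset by blast
  have clK: "closed K" unfolding K_def using C(1) S1_closed closed_Times by blast
  have LK: "l \<in> K" if "l \<in> L" "dist w l \<le> r" for l
    using that C unfolding K_def offdiag_def by auto
  define G where "G = (\<lambda>x. K - {x}) ` (K \<inter> ball w r)"
  have cG: "countable G" unfolding G_def using cK by auto
  have "K \<subseteq> closure (\<Inter> G)"
  proof (rule Baire[OF clK cG])
    fix T assume "T \<in> G"
    then obtain x where x: "x \<in> K" "x \<in> ball w r" "T = K - {x}" unfolding G_def by auto
    have "openin (top_of_set K) (K \<inter> (- {x}))" by (intro openin_open_Int open_Compl closed_singleton)
    moreover have "K \<inter> (- {x}) = T" using x by auto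
    ultimately have "openin (top_of_set K) T" by simp
    moreover have "K \<subseteq> closure T"
    proof
      fix y assume y: "y \<in> K"
      show "y \<in> closure T"
      proof (cases "y = x")
        case False
        then have "y \<in> T" using y x by simp
        then show ?thesis using closure_subset by blast
      next
        case True
        have xL: "x \<in> L" using x(1) KL by blast
        have "x islimpt T" unfolding islimpt_approachable
        proof (intro allI impI)
          fix e :: real assume e: "e > 0"
          define e' where "e' = min e (r - dist w x)"
          have e': "e' > 0" unfolding e'_def using e x by auto
          obtain x' where x': "x' \<in> L" "x' \<noteq> x" "dist x' x < e'"
            using perf[OF xL] e' unfolding islimpt_approachable by blast
          have "dist w x' \<le> dist w x + dist x' x" using dist_triangle[of w x' x] by (simp add: dist_commute)
          then have "dist w x' \<le> r" using x' e'_def by auto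
          then have "x' \<in> T" using LK x' x by auto
          then show "\<exists>x'\<in>T. x' \<noteq> x \<and> dist x' x < e" using x' e'_def by auto
        qed
        then show ?thesis using True closure_def by auto
      qed
    qed
    ultimately show "openin (top_of_set K) T \<and> K \<subseteq> closure T" by blast
  qed
  moreover have "w \<in> K" using LK[OF w(1)] r by simp
  moreover have "\<Inter> G \<subseteq> - ball w r"
  proof
    fix z assume z: "z \<in> \<Inter> G"
    have wG: "K - {w} \<in> G" unfolding G_def using \<open>w \<in> K\<close> r by auto
    then have zK: "z \<in> K" using z by auto
    show "z \<in> - ball w r"
    proof
      assume "z \<in> ball w r"
      then have "K - {z} \<in> G" unfolding G_def using zK by auto
      then show False using z by auto
    qed
  qed
  then have "closure (\<Inter> G) \<subseteq> - ball w r"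
    by (simp add: closure_minimal closed_Compl)
  ultimately show False using r by auto
qed

context lamctx begin

lemma closedL: obtains C where "closed C" "\<Lambda> = offdiag \<inter> C"
  using clo closedin_closed by metis

lemma N_closed: "closed N"
  unfolding closed_limpt
proof (intro allI impI)
  fix p assume lp: "p islimpt N"
  obtain a b where p: "p = (a, b)" by fastforce
  have "N \<subseteq> S1 \<times> S1" using N_S1 by auto
  moreover have "closed (S1 \<times> S1)" using S1_closed closed_Times by blast
  ultimately have "p \<in> S1 \<times> S1" using lp closed_limpt islimpt_subset by blast
  then have S: "a \<in> S1" "b \<in> S1" using p by auto
  show "p \<in> N"
  proof (cases "a = b \<or> (a, b) \<in> \<Lambda>")
    case True then show ?thesis using p S unfolding NR_def by auto
  next
    case False
    then have ab: "a \<noteq> b" "(a, b) \<notin> \<Lambda>" by auto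
    obtain C where C: "closed C" "\<Lambda> = offdiag \<inter> C" by (rule closedL)
    have "(a, b) \<in> offdiag" using S ab unfolding offdiag_def by auto
    then have nC: "(a, b) \<notin> C" using C ab by auto
    have "cf \<Lambda> a b" unfolding cf_def
    proof (intro allI impI notI)
      fix c d assume cd: "(c, d) \<in> \<Lambda>" and L: "linked a b c d"
      have Lsw: "linked c d a b" using linked_swap L by blast
      then have "side c d a * side c d b < 0" using linked_side by blast
      define U where "U = {(x, y). side x y c * side x y d < 0} \<inter> {(x, y). x \<noteq> y} \<inter> (- C)"
      have oU: "open U" unfolding U_def
        using open_linked_pairs2 open_offd C(1) by (intro open_Int) auto
      have "side a b c * side a b d < 0" using L linked_side by blast
      then have pU: "p \<in> U" unfolding U_def using p ab nC by auto
      obtain q where q: "q \<in> N" "q \<in> U" "q \<noteq> p"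
        using lp oU pU unfolding islimpt_def by blast
      obtain x y where qxy: "q = (x, y)" by fastforce
      have xy: "x \<in> S1" "y \<in> S1" "x \<noteq> y" using q qxy N_S1 unfolding U_def by auto
      have "(x, y) \<notin> \<Lambda>" using q qxy C unfolding U_def by auto
      then have cfxy: "cf \<Lambda> x y" using q qxy xy unfolding NR_def by auto
      have "linked x y c d" using q qxy xy leafD[OF cd] linked_side unfolding U_def by auto
      then show False using cfxy cd unfolding cf_def by blast
    qed
    then show ?thesis using p S unfolding NR_def by auto
  qed
qed

lemma countable_cf:
  assumes ab: "(a, b) \<in> offdiag" and cnt: "countable {(c, d) \<in> \<Lambda>. linked a b c d}"
  shows "cf \<Lambda> a b"
  unfolding cf_def
proof (intro allI impI notI)
  fix c d assume cd: "(c, d) \<in> \<Lambda>" and L: "linked a b c d"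
  obtain C where C: "closed C" "\<Lambda> = offdiag \<inter> C" by (rule closedL)
  define U where "U = {(x, y). side a b x * side a b y < 0}"
  have "\<Lambda> \<inter> U \<subseteq> {(c, d) \<in> \<Lambda>. linked a b c d}"
  proof
    fix p assume "p \<in> \<Lambda> \<inter> U"
    then obtain x y where p: "p = (x, y)" "(x, y) \<in> \<Lambda>" "side a b x * side a b y < 0" unfolding U_def by auto
    then have "linked a b x y" using ab leafD[OF p(2)] linked_side unfolding offdiag_def by auto
    then show "p \<in> {(c, d) \<in> \<Lambda>. linked a b c d}" using p by auto
  qed
  then have "countable (\<Lambda> \<inter> U)" using cnt countable_subset by blast
  moreover have "(c, d) \<in> U" unfolding U_def using L linked_side by auto
  ultimately show False
    using perfect_countable[OF C noiso, of U "(c, d)"] open_linked_pairs cd unfolding U_def by auto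
qed

lemma Rel_eq: "Rel \<Lambda> = N"
proof
  have "N \<in> {R. equiv S1 R \<and> closed R \<and> \<Lambda> \<subseteq> R \<and>
      {(a, b). (a, b) \<in> offdiag \<and> countable {(c, d) \<in> \<Lambda>. linked a b c d}} \<subseteq> R}"
  proof -
    have "{(a, b). (a, b) \<in> offdiag \<and> countable {(c, d) \<in> \<Lambda>. linked a b c d}} \<subseteq> N"
    proof
      fix p assume "p \<in> {(a, b). (a, b) \<in> offdiag \<and> countable {(c, d) \<in> \<Lambda>. linked a b c d}}"
      then obtain a b where "p = (a, b)" "(a, b) \<in> offdiag" "countable {(c, d) \<in> \<Lambda>. linked a b c d}" by blast
      then show "p \<in> N" using countable_cf unfolding NR_def offdiag_def by auto
    qed
    moreover have "\<Lambda> \<subseteq> N" using leaf_N by auto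
    ultimately show ?thesis using N_equiv N_closed by (simp only: mem_Collect_eq)
  qed
  then show "Rel \<Lambda> \<subseteq> N" unfolding Rel_def by (rule Inter_lower)
next
  show "N \<subseteq> Rel \<Lambda>" unfolding Rel_def
  proof (rule Inter_greatest)
    fix R assume R: "R \<in> {R. equiv S1 R \<and> closed R \<and> \<Lambda> \<subseteq> R \<and>
      {(a, b). (a, b) \<in> offdiag \<and> countable {(c, d) \<in> \<Lambda>. linked a b c d}} \<subseteq> R}"
    then have R': "equiv S1 R" "\<Lambda> \<subseteq> R"
      "{(a, b). (a, b) \<in> offdiag \<and> countable {(c, d) \<in> \<Lambda>. linked a b c d}} \<subseteq> R"
      by (simp_all only: mem_Collect_eq)
    show "N \<subseteq> R"
    proof
      fix p assume p: "p \<in> N"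
      obtain a b where pab: "p = (a, b)" by fastforce
      have S: "a \<in> S1" "b \<in> S1" using p pab N_S1 by auto
      have cases: "a = b \<or> (a, b) \<in> \<Lambda> \<or> (a \<noteq> b \<and> cf \<Lambda> a b)" using p pab unfolding NR_def by auto
      show "p \<in> R"
      proof (cases "a = b")
        case True
        have "(a, a) \<in> R" using R'(1) S unfolding equiv_def refl_on_def by blast
        then show ?thesis using True pab by simp
      next
        case F: False
        show ?thesis
        proof (cases "(a, b) \<in> \<Lambda>")
          case True then show ?thesis using R'(2) pab by blast
        next
          case False
          then have "cf \<Lambda> a b" using cases F by blast
          then have "{(c, d) \<in> \<Lambda>. linked a b c d} = {}" unfolding cf_def by blast
          then have cn: "countable {(c, d) \<in> \<Lambda>. linked a b c d}" by (simp only: countable_empty)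
          have "(a, b) \<in> offdiag" using S F unfolding offdiag_def by simp
          then have "(a, b) \<in> {(a, b). (a, b) \<in> offdiag \<and> countable {(c, d) \<in> \<Lambda>. linked a b c d}}"
            using cn by simp
          then show ?thesis using R'(3) pab by blast
        qed
      qed
    qed
  qed
qed

end

context lamctx begin

lemma cover_exists:
  assumes aS: "a \<in> S1" and bS: "b \<in> S1" and cfab: "cf \<Lambda> a b"
    and t: "0 < t" "t < rang a b" and nN: "(a, a * cis t) \<notin> N"
  shows "\<exists>u v. (u, v) \<in> \<Lambda> \<and> 0 < rang a u \<and> rang a u < t \<and> t < rang a v \<and> rang a v \<le> rang a b"
proof -
  let ?P = "a * cis t"
  have PS: "?P \<in> S1" using aS by (simp add: S1_mult)
  have rP: "rang a ?P = t" using rang_mul[OF aS] t rang_range[of a b] by auto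
  have "\<not> cf \<Lambda> a ?P" using nN aS PS unfolding NR_def by auto
  then obtain x y where xy: "(x, y) \<in> \<Lambda>" "linked a ?P x y" unfolding cf_def by auto
  have xyS: "x \<in> S1" "y \<in> S1" using leafD xy by auto
  have L1: "Lk 0 t (rang a x) (rang a y)" using xy(2) linked_rang[OF aS] rP by auto
  have L2: "\<not> Lk 0 (rang a b) (rang a x) (rang a y)"
    using cfab xy(1) linked_rang[OF aS] aS bS xyS unfolding cf_def by auto
  have rr: "0 \<le> rang a x" "rang a x < 2*pi" "0 \<le> rang a y" "rang a y < 2*pi" "rang a b < 2*pi"
    using rang_range by auto
  have "(0 < rang a x \<and> rang a x < t \<and> t < rang a y \<and> rang a y \<le> rang a b) \<or>
        (0 < rang a y \<and> rang a y < t \<and> t < rang a x \<and> rang a x \<le> rang a b)"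
    using L1 L2 rr t unfolding Lk_def btw_alt by (smt (verit))
  then show ?thesis using xy(1) leaf_sym by blast
qed

lemma arcK:
  assumes aS: "a \<in> S1" and bS: "b \<in> S1" and ab: "a \<noteq> b" and cfab: "cf \<Lambda> a b"
    and nL: "(a, b) \<notin> \<Lambda>"
  shows "\<exists>c. c \<in> S1 \<and> 0 < rang a c \<and> rang a c < rang a b \<and> (a, c) \<in> N"
proof -
  define \<beta> where "\<beta> = rang a b"
  have \<beta>: "0 < \<beta>" "\<beta> < 2*pi"
  proof -
    have "rang a b \<noteq> rang a a" using rang_inj[OF aS aS bS] ab by auto
    then show "0 < \<beta>" "\<beta> < 2*pi" unfolding \<beta>_def using rang_range[of a b] by auto
  qed
  have rP: "rang a (a * cis t) = t" if "0 \<le> t" "t < 2*pi" for t using rang_mul[OF aS] that by auto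
  have PS: "a * cis t \<in> S1" for t using aS by (simp add: S1_mult)
  define t0 where "t0 = \<beta> / 2"
  have t0: "0 < t0" "t0 < \<beta>" unfolding t0_def using \<beta> by auto
  show ?thesis
  proof (cases "(a, a * cis t0) \<in> N")
    case True
    then show ?thesis using PS rP[of t0] t0 \<beta> unfolding \<beta>_def by (intro exI[of _ "a * cis t0"]) auto
  next
    case False
    define cov where "cov = (\<lambda>t u v. (u, v) \<in> \<Lambda> \<and> 0 < rang a u \<and> rang a u < t \<and> t < rang a v \<and> rang a v \<le> \<beta>)"
    define S where "S = {rang a u | u. \<exists>v. cov t0 u v}"
    have Sne: "S \<noteq> {}" using cover_exists[OF aS bS cfab t0[unfolded \<beta>_def] False]
      unfolding S_def cov_def \<beta>_def by auto
    have Spos: "\<And>s. s \<in> S \<Longrightarrow> 0 < s \<and> s < t0" unfolding S_def cov_def by auto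
    have bdd: "bdd_below S" using Spos by (meson bdd_below.I less_imp_le)
    define m where "m = Inf S"
    have m0: "0 \<le> m" unfolding m_def using Sne Spos by (meson cInf_greatest less_imp_le)
    have mlt: "m < t0"
    proof -
      obtain s where "s \<in> S" using Sne by auto
      then show ?thesis unfolding m_def using cInf_lower[OF _ bdd, of s] Spos by fastforce
    qed
    show ?thesis
    proof (cases "m > 0")
      case mpos: True
      show ?thesis
      proof (cases "(a, a * cis m) \<in> N")
        case True
        then show ?thesis using PS rP[of m] mpos mlt t0 \<beta> unfolding \<beta>_def
          by (intro exI[of _ "a * cis m"]) auto
      next
        case nN: False
        obtain u' v' where c': "cov m u' v'"
          using cover_exists[OF aS bS cfab, of m] mpos mlt t0 nN unfolding cov_def \<beta>_def by auto
        have "Inf S < rang a v'" using c' unfolding cov_def m_def by auto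
        then obtain s where s: "s \<in> S" "s < rang a v'" using cInf_less_iff[OF Sne bdd] by auto
        then obtain u v where uv: "s = rang a u" "cov t0 u v" unfolding S_def by auto
        have ms: "m \<le> s" unfolding m_def using cInf_lower[OF s(1) bdd] .
        have S4: "u \<in> S1" "v \<in> S1" "u' \<in> S1" "v' \<in> S1" using leafD uv c' unfolding cov_def by auto
        have nl: "\<not> Lk (rang a u') (rang a v') (rang a u) (rang a v)"
          using unl[of u' v' u v] c' uv linked_rang[OF aS] S4 unfolding cov_def by auto
        have rr: "0 \<le> rang a v" "rang a v < 2*pi" using rang_range by auto
        have "cov t0 u' v'"
          using nl uv c' s ms mpos rr t0 unfolding cov_def Lk_def btw_alt by (smt (verit))
        then have "rang a u' \<in> S" unfolding S_def by auto
        then have "m \<le> rang a u'" unfolding m_def using cInf_lower[OF _ bdd] by auto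
        then show ?thesis using c' unfolding cov_def by auto
      qed
    next
      case False
      then have m00: "m = 0" using m0 by auto
      have "\<forall>n. \<exists>p. cov t0 (fst p) (snd p) \<and> rang a (fst p) < inverse (real (Suc n))"
      proof
        fix n
        have "Inf S < inverse (real (Suc n))" using m00 unfolding m_def by simp
        then obtain s where "s \<in> S" "s < inverse (real (Suc n))" using cInf_less_iff[OF Sne bdd] by auto
        then obtain u v where "cov t0 u v" "rang a u < inverse (real (Suc n))" unfolding S_def by auto
        then show "\<exists>p. cov t0 (fst p) (snd p) \<and> rang a (fst p) < inverse (real (Suc n))"
          by (intro exI[of _ "(u, v)"]) simp
      qed
      then obtain f where f: "\<forall>n. cov t0 (fst (f n)) (snd (f n)) \<and> rang a (fst (f n)) < inverse (real (Suc n))"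
        by (rule choice[THEN exE])
      define U where "U = (\<lambda>n. fst (f n))"
      define V where "V = (\<lambda>n. snd (f n))"
      have UV: "\<And>n. cov t0 (U n) (V n)" "\<And>n. rang a (U n) < inverse (real (Suc n))"
        using f unfolding U_def V_def by auto
      have Vin: "rang a (V n) \<in> {t0..\<beta>}" for n using UV(1)[of n] unfolding cov_def by auto
      have sc: "seq_compact {t0..\<beta>}" by (rule compact_imp_seq_compact[OF compact_Icc])
      obtain l \<sigma> where l: "l \<in> {t0..\<beta>}" "strict_mono \<sigma>" "((\<lambda>n. rang a (V n)) \<circ> \<sigma>) \<longlonglongrightarrow> l"
        using seq_compactE[OF sc, of "\<lambda>n. rang a (V n)"] Vin by blast
      have Ulim: "(\<lambda>n. rang a (U (\<sigma> n))) \<longlonglongrightarrow> 0"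
      proof (rule tendsto_sandwich[of "\<lambda>n. 0" _ _ "\<lambda>n. inverse (real (Suc n))"])
        show "\<forall>\<^sub>F n in sequentially. 0 \<le> rang a (U (\<sigma> n))" using rang_range by (simp add: always_eventually)
        have "rang a (U (\<sigma> n)) \<le> inverse (real (Suc n))" for n
        proof -
          have "n \<le> \<sigma> n" using seq_suble[OF l(2)] by auto
          then have "inverse (real (Suc (\<sigma> n))) \<le> inverse (real (Suc n))" by (simp add: le_imp_inverse_le)
          then show ?thesis using UV(2)[of "\<sigma> n"] by linarith
        qed
        then show "\<forall>\<^sub>F n in sequentially. rang a (U (\<sigma> n)) \<le> inverse (real (Suc n))" by (simp add: always_eventually)
        show "(\<lambda>n. 0::real) \<longlonglongrightarrow> 0" by simp
        show "(\<lambda>n. inverse (real (Suc n))) \<longlonglongrightarrow> 0" by (rule LIMSEQ_inverse_real_of_nat)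
      qed
      have US: "U n \<in> S1" "V n \<in> S1" for n using UV(1) leafD unfolding cov_def by auto
      have "(\<lambda>n. a * cis (rang a (U (\<sigma> n)))) \<longlonglongrightarrow> a * cis 0"
        by (intro tendsto_mult_left tendsto_cis Ulim)
      then have U_lim: "(\<lambda>n. U (\<sigma> n)) \<longlonglongrightarrow> a" using cis_rang[OF aS US(1)] by simp
      have "(\<lambda>n. a * cis (rang a (V (\<sigma> n)))) \<longlonglongrightarrow> a * cis l"
        using l(3) by (intro tendsto_mult_left tendsto_cis) (simp add: comp_def)
      then have V_lim: "(\<lambda>n. V (\<sigma> n)) \<longlonglongrightarrow> a * cis l" using cis_rang[OF aS US(2)] by simp
      have pl: "(\<lambda>n. (U (\<sigma> n), V (\<sigma> n))) \<longlonglongrightarrow> (a, a * cis l)"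
        by (rule tendsto_Pair[OF U_lim V_lim])
      obtain C where C: "closed C" "\<Lambda> = offdiag \<inter> C" by (rule closedL)
      have LC: "\<Lambda> \<subseteq> C" using C(2) by blast
      have "\<forall>n. (U (\<sigma> n), V (\<sigma> n)) \<in> C"
      proof
        fix n show "(U (\<sigma> n), V (\<sigma> n)) \<in> C" using UV(1)[of "\<sigma> n"] LC unfolding cov_def by blast
      qed
      then have inC: "(a, a * cis l) \<in> C" using closed_sequentially[OF C(1) _ pl] by blast
      have rl: "rang a (a * cis l) = l" using rP l(1) \<beta> t0 by auto
      have "a * cis l \<noteq> a" using rl l(1) t0 by auto
      then have "(a, a * cis l) \<in> offdiag" using aS PS unfolding offdiag_def by auto
      then have leaf: "(a, a * cis l) \<in> \<Lambda>" using inC C(2) by blast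
      have "l \<noteq> \<beta>"
      proof
        assume "l = \<beta>"
        then have "a * cis l = b" using cis_rang[OF aS bS] unfolding \<beta>_def by simp
        then show False using leaf nL by simp
      qed
      then show ?thesis using leaf leaf_N PS rl l(1) t0 unfolding \<beta>_def
        by (intro exI[of _ "a * cis l"]) auto
    qed
  qed
qed

end

lemma sh_comp: "rang b z = sh (rang a b) (rang a z)"
  using ang_range[of a] ang_range[of b] ang_range[of z] pi_gt_zero
  unfolding rang_def sh_def by (smt (verit))

lemma side_convex: "convex {z. 0 \<le> side a b z}" "convex {z. side a b z \<le> 0}"
proof -
  have e0: "side a b (u *\<^sub>R x + (1 - u) *\<^sub>R y) = u * side a b x + (1 - u) * side a b y" for u x y
    by (simp add: side_def scaleR_conv_of_real algebra_simps)
  have e: "side a b (u *\<^sub>R x + v *\<^sub>R y) = u * side a b x + v * side a b y" if "u + v = 1" for u v x y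
  proof -
    have "v = 1 - u" using that by simp
    then show ?thesis using e0 by simp
  qed
  show "convex {z. 0 \<le> side a b z}" unfolding convex_def using e by (simp add: add_nonneg_nonneg)
  show "convex {z. side a b z \<le> 0}" unfolding convex_def using e
    by (simp add: add_nonpos_nonpos mult_nonneg_nonpos)
qed

lemma side_perp: "side a b (p + of_real s * (\<i> * (b - a))) = side a b p + s * (cmod (b - a))^2"
proof -
  have "(cmod (b - a))^2 = (Re b - Re a)^2 + (Im b - Im a)^2" by (simp add: cmod_power2)
  moreover have "side a b (p + of_real s * (\<i> * (b - a))) = side a b p + s * ((Re b - Re a)^2 + (Im b - Im a)^2)"
    by (simp add: side_def algebra_simps power2_eq_square)
  ultimately show ?thesis by simp
qed

lemma not_interior_half:
  assumes ab: "a \<noteq> b" and p: "side a b p = 0"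
  shows "p \<notin> interior {z. 0 \<le> side a b z}" "p \<notin> interior {z. side a b z \<le> 0}"
proof -
  have u: "cmod (b - a) > 0" using ab by simp
  have pt: "dist (p + of_real s * (\<i> * (b - a))) p = \<bar>s\<bar> * cmod (b - a)" for s
    by (simp add: dist_norm norm_mult)
  show "p \<notin> interior {z. 0 \<le> side a b z}"
  proof
    assume "p \<in> interior {z. 0 \<le> side a b z}"
    then obtain e where e: "e > 0" "ball p e \<subseteq> {z. 0 \<le> side a b z}" using mem_interior by blast
    define s where "s = - (e / 2) / cmod (b - a)"
    have "dist p (p + of_real s * (\<i> * (b - a))) < e"
      using pt[of s] u e unfolding s_def by (simp add: dist_commute abs_div)
    then have "0 \<le> side a b (p + of_real s * (\<i> * (b - a)))" using e by auto
    moreover have "s * (cmod (b - a))^2 < 0" unfolding s_def using u e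
      by (simp add: mult_neg_pos divide_neg_pos)
    ultimately show False using side_perp p by simp
  qed
  show "p \<notin> interior {z. side a b z \<le> 0}"
  proof
    assume "p \<in> interior {z. side a b z \<le> 0}"
    then obtain e where e: "e > 0" "ball p e \<subseteq> {z. side a b z \<le> 0}" using mem_interior by blast
    define s where "s = (e / 2) / cmod (b - a)"
    have "dist p (p + of_real s * (\<i> * (b - a))) < e"
      using pt[of s] u e unfolding s_def by (simp add: dist_commute abs_div)
    then have "side a b (p + of_real s * (\<i> * (b - a))) \<le> 0" using e by auto
    moreover have "s * (cmod (b - a))^2 > 0" unfolding s_def using u e by simp
    ultimately show False using side_perp p by simp
  qed
qed

lemma seg_frontier:
  assumes ab: "a \<noteq> b" "a \<in> \<nu>" "b \<in> \<nu>"
    and side: "(\<forall>z\<in>\<nu>. 0 \<le> side a b z) \<or> (\<forall>z\<in>\<nu>. side a b z \<le> 0)"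
  shows "closed_segment a b \<subseteq> frontier (convex hull \<nu>)"
proof
  fix p assume p: "p \<in> closed_segment a b"
  have "closed_segment a b \<subseteq> convex hull \<nu>"
    using ab by (simp add: closed_segment_subset convex_convex_hull hull_inc)
  then have pc: "p \<in> closure (convex hull \<nu>)" using p closure_subset by blast
  obtain t where t: "p = (1 - t) *\<^sub>R a + t *\<^sub>R b" "0 \<le> t" "t \<le> 1"
    using p unfolding closed_segment_def by auto
  have "p = a + of_real t * (b - a)" using t by (simp add: scaleR_conv_of_real algebra_simps)
  then have sp: "side a b p = 0" using side_affine[of a b a t b] by simp
  have "p \<notin> interior (convex hull \<nu>)"
    using side
  proof
    assume "\<forall>z\<in>\<nu>. 0 \<le> side a b z"
    then have "convex hull \<nu> \<subseteq> {z. 0 \<le> side a b z}" by (intro hull_minimal side_convex) auto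
    then show ?thesis using not_interior_half[OF ab(1) sp] interior_mono by blast
  next
    assume "\<forall>z\<in>\<nu>. side a b z \<le> 0"
    then have "convex hull \<nu> \<subseteq> {z. side a b z \<le> 0}" by (intro hull_minimal side_convex) auto
    then show ?thesis using not_interior_half[OF ab(1) sp] interior_mono by blast
  qed
  then show "p \<in> frontier (convex hull \<nu>)" using pc unfolding frontier_def by auto
qed

context lamctx begin

lemma two_sides:
  assumes aS: "a \<in> S1" and bS: "b \<in> S1" and ab: "a \<noteq> b" and cfab: "cf \<Lambda> a b" and nL: "(a, b) \<notin> \<Lambda>"
  shows "\<exists>c c'. (a, c) \<in> N \<and> (b, c') \<in> N \<and> linked a b c c'"
proof -
  obtain c where c: "c \<in> S1" "0 < rang a c" "rang a c < rang a b" "(a, c) \<in> N"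
    using arcK[OF aS bS ab cfab nL] by blast
  have nL': "(b, a) \<notin> \<Lambda>" using nL leaf_sym by blast
  obtain c' where c': "c' \<in> S1" "0 < rang b c'" "rang b c' < rang b a" "(b, c') \<in> N"
    using arcK[OF bS aS ab[symmetric] cf_sym[OF cfab] nL'] by blast
  have e1: "rang b c' = sh (rang a b) (rang a c')" "rang b a = sh (rang a b) (rang a a)"
    using sh_comp by blast+
  have rr: "0 \<le> rang a c'" "rang a c' < 2*pi" "rang a b < 2*pi" "0 \<le> rang a b" using rang_range by auto
  have "Lk (rang a a) (rang a b) (rang a c) (rang a c')"
    using c c' e1 rr unfolding rang_self Lk_def btw_alt sh_def by (smt (verit))
  then have "linked a b c c'" using linked_rang[OF aS] aS bS c c' by blast
  then show ?thesis using c c' by blast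
qed

lemma Lam_sub: "Lam N \<subseteq> \<Lambda>"
proof
  fix pq assume pq: "pq \<in> Lam N"
  obtain p q where pqe: "pq = (p, q)" by fastforce
  define \<nu> where "\<nu> = N `` {p}"
  have D: "q \<in> \<nu> \<and> p \<in> \<nu> \<and> p \<noteq> q \<and> ((finite \<nu> \<and> card \<nu> = 2 \<and> {p, q} = \<nu>) \<or>
     ((infinite \<nu> \<or> card \<nu> > 2) \<and> closed_segment p q \<subseteq> frontier (convex hull \<nu>)))"
    using Lam_memD[OF N_equiv] pq pqe unfolding \<nu>_def by blast
  have pqN: "(p, q) \<in> N" using D unfolding \<nu>_def by auto
  have S: "p \<in> S1" "q \<in> S1" using N_S1[OF pqN] by auto
  show "pq \<in> \<Lambda>"
  proof (rule ccontr)
    assume "pq \<notin> \<Lambda>"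
    then have nL: "(p, q) \<notin> \<Lambda>" using pqe by simp
    then have cfpq: "cf \<Lambda> p q" using pqN D unfolding NR_def by auto
    obtain c c' where cc: "(p, c) \<in> N" "(q, c') \<in> N" "linked p q c c'"
      using two_sides[OF S _ cfpq nL] D by blast
    have cn: "c \<in> \<nu>" "c' \<in> \<nu>" using cc pqN N_trans unfolding \<nu>_def by auto
    have sub: "\<nu> \<subseteq> S1" unfolding \<nu>_def by (rule equiv_sub[OF N_equiv])
    have disj: "(finite \<nu> \<and> card \<nu> = 2 \<and> {p, q} = \<nu>) \<or>
     ((infinite \<nu> \<or> card \<nu> > 2) \<and> closed_segment p q \<subseteq> frontier (convex hull \<nu>))" using D by blast
    show False using disj
    proof
      assume "finite \<nu> \<and> card \<nu> = 2 \<and> {p, q} = \<nu>"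
      then show False using cn linked_distinct[OF cc(3)] by auto
    next
      assume "(infinite \<nu> \<or> card \<nu> > 2) \<and> closed_segment p q \<subseteq> frontier (convex hull \<nu>)"
      then have "(\<forall>z\<in>\<nu>. 0 \<le> side p q z) \<or> (\<forall>z\<in>\<nu>. side p q z \<le> 0)"
        using one_side[OF sub] D by blast
      moreover have "side p q c * side p q c' < 0" using cc(3) linked_side by blast
      ultimately show False using cn by (auto simp: mult_less_0_iff)
    qed
  qed
qed

lemma Lam_sup: "\<Lambda> \<subseteq> Lam N"
proof
  fix ab assume abL: "ab \<in> \<Lambda>"
  obtain a b where abe: "ab = (a, b)" by fastforce
  have L: "(a, b) \<in> \<Lambda>" using abL abe by simp
  have S: "a \<in> S1" "b \<in> S1" "a \<noteq> b" using leafD[OF L] by auto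
  define \<nu> where "\<nu> = N `` {a}"
  have an: "a \<in> \<nu>" "b \<in> \<nu>" unfolding \<nu>_def using N_refl S leaf_N L by auto
  have "(finite \<nu> \<and> card \<nu> = 2 \<and> {a, b} = \<nu> \<and> a \<noteq> b) \<or>
      ((infinite \<nu> \<or> card \<nu> > 2) \<and> a \<in> \<nu> \<and> b \<in> \<nu> \<and> a \<noteq> b \<and>
        closed_segment a b \<subseteq> frontier (convex hull \<nu>))"
  proof (cases "finite \<nu> \<and> card \<nu> = 2")
    case True
    have "{a, b} \<subseteq> \<nu>" "card {a, b} = 2" using an S by auto
    then have "{a, b} = \<nu>" using True card_subset_eq by metis
    then show ?thesis using True S by auto
  next
    case False
    have c2: "infinite \<nu> \<or> card \<nu> > 2"
    proof (cases "finite \<nu>")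
      case True
      have "card {a, b} \<le> card \<nu>" using True an by (intro card_mono) auto
      then show ?thesis using False True S by auto
    qed auto
    have os: "(\<forall>z\<in>\<nu>. 0 \<le> side a b z) \<or> (\<forall>z\<in>\<nu>. side a b z \<le> 0)"
    proof (rule ccontr)
      assume "\<not> ?thesis"
      then obtain z1 z2 where z: "z1 \<in> \<nu>" "z2 \<in> \<nu>" "side a b z1 < 0" "side a b z2 > 0" by (auto simp: not_le)
      have zS: "z1 \<in> S1" "z2 \<in> S1" using z equiv_sub[OF N_equiv] unfolding \<nu>_def by auto
      have "side a b z1 * side a b z2 < 0" using z by (simp add: mult_neg_pos)
      then have "linked a b z1 z2" using linked_side S zS by blast
      moreover have "(z1, z2) \<in> N" using z N_sym N_trans unfolding \<nu>_def by blast
      ultimately show False using N_nocross' L by blast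
    qed
    show ?thesis using c2 an S seg_frontier[OF S(3) an os] by blast
  qed
  then show "ab \<in> Lam N" unfolding Lam_def Let_def abe \<nu>_def using S by blast
qed

lemma Lam_eq: "Lam N = \<Lambda>"
  using Lam_sub Lam_sup by blast

lemma laminar_N: "laminar_relation N"
  unfolding laminar_relation_def
proof (intro conjI ballI allI impI)
  show "equiv S1 N" by (rule N_equiv)
next
  fix x assume "x \<in> S1"
  have "N `` {x} = (\<lambda>y. (x, y)) -` N" by auto
  moreover have "closed ((\<lambda>y. (x, y)) -` N)"
    by (rule continuous_closed_vimage[OF N_closed]) (intro continuous_intros)
  ultimately show "closed (N `` {x})" by simp
next
  have "closedin (top_of_set offdiag) (offdiag \<inter> N)" by (rule closedin_closed_Int[OF N_closed])
  then show "closedin (top_of_set offdiag) (N \<inter> offdiag)" by (simp add: Int_commute)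
next
  fix x y a b c d assume xy: "x \<in> S1" "y \<in> S1" "(x, y) \<notin> N"
    and ab: "a \<in> N `` {x}" "b \<in> N `` {x}" and cd: "c \<in> N `` {y}" "d \<in> N `` {y}"
  show "\<not> linked a b c d"
  proof
    assume L: "linked a b c d"
    have abN: "(a, b) \<in> N" using ab N_sym N_trans by blast
    have cdN: "(c, d) \<in> N" using cd N_sym N_trans by blast
    have nab: "(a, b) \<notin> \<Lambda>" using N_nocross'[OF cdN] L by blast
    have ncd: "(c, d) \<notin> \<Lambda>" using N_nocross[OF abN] L by blast
    have ab': "a \<noteq> b" "c \<noteq> d" "a \<noteq> c" using linked_distinct[OF L] by auto
    have cfab: "cf \<Lambda> a b" using abN nab ab' unfolding NR_def by auto
    have cfcd: "cf \<Lambda> c d" using cdN ncd ab' unfolding NR_def by auto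
    have S4: "a \<in> S1" "b \<in> S1" "c \<in> S1" "d \<in> S1" using linked_S1[OF L] by auto
    have "cf \<Lambda> a c" unfolding cf_def
    proof (intro allI impI notI)
      fix u v assume uv: "(u, v) \<in> \<Lambda>" and L2: "linked a c u v"
      have uvS: "u \<in> S1" "v \<in> S1" using leafD[OF uv] by auto
      have "Lk (ang a) (ang b) (ang c) (ang d)" "Lk (ang a) (ang c) (ang u) (ang v)"
        using L L2 linked_ang by blast+
      then have "Lk (ang a) (ang b) (ang u) (ang v) \<or> Lk (ang c) (ang d) (ang u) (ang v)" using C2 by blast
      then have "linked a b u v \<or> linked c d u v" using linked_ang S4 uvS by blast
      then show False using cfab cfcd uv unfolding cf_def by blast
    qed
    then have "(a, c) \<in> N" using S4 unfolding NR_def by auto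
    then have "(x, y) \<in> N" using ab cd N_sym N_trans by blast
    then show False using xy by blast
  qed
qed

end

theorem proposition2p5:
  shows "(\<forall>\<Lambda>. boundary_lamination \<Lambda> \<longrightarrow> at_most_two_leaves \<Lambda>) \<and>
         (\<forall>\<Lambda>. lamination \<Lambda> \<and> at_most_two_leaves \<Lambda> \<and> (\<forall>l \<in> \<Lambda>. \<not> isolated_leaf \<Lambda> l) \<longrightarrow>
              Lam (Rel \<Lambda>) = \<Lambda> \<and> boundary_lamination \<Lambda>)"
proof -
  have P1: "\<forall>\<Lambda>. boundary_lamination \<Lambda> \<longrightarrow> at_most_two_leaves \<Lambda>" using partA by blast
  have P2: "Lam (Rel \<Lambda>) = \<Lambda> \<and> boundary_lamination \<Lambda>"
    if A: "lamination \<Lambda> \<and> at_most_two_leaves \<Lambda> \<and> (\<forall>l \<in> \<Lambda>. \<not> isolated_leaf \<Lambda> l)" for \<Lambda>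
  proof -
    interpret lamctx \<Lambda>
    proof
      show "lamination \<Lambda>" using A by blast
    next
      fix p assume "p \<in> S1" then show "finite {q. (p, q) \<in> \<Lambda>}" using A unfolding at_most_two_leaves_def by blast
    next
      fix l assume "l \<in> \<Lambda>" then show "l islimpt \<Lambda>" using A unfolding isolated_leaf_def by blast
    qed
    show ?thesis using Rel_eq Lam_eq laminar_N unfolding boundary_lamination_def by auto
  qed
  show ?thesis using P1 P2 by blast
qed


end
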